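(* Let $x_0\ge x_1\ge\cdots\ge x_t$ be a non-increasing sequence of reals and let $f$ be a nonnegative, non-decreasing, continuously differentiable function on $[x_t,x_0]$ such that $x_n-x_{n+1}\ge f(x_{n+1})$ for all $n=0,1,\dots,t-1$. Then $\ln\frac{f(x_0)}{f(x_t)}+\int_{x_t}^{x_0}\frac{1}{f(x)}\,dx\ge t$. *)

theory Defs
  imports "HOL-Analysis.Analysis"
begin

end

theory Submission
  imports Defs
begin

lemma chain_le:
  fixes x :: "nat \<Rightarrow> real"
  assumes "\<And>n. n < t \<Longrightarrow> x (Suc n) \<le> x n"
  shows "j \<le> t \<Longrightarrow> i \<le> j \<Longrightarrow> x j \<le> x i"
proof (induction j)
  case 0 then show ?case by simp
next
  case (Suc j)
  show ?case
  proof (cases "i = Suc j")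
    case False
    then have "i \<le> j" using Suc.prems by simp
    then have "x j \<le> x i" using Suc by simp
    moreover have "x (Suc j) \<le> x j" using assms Suc.prems by simp
    ultimately show ?thesis by linarith
  qed simp
qed

lemma ln_ineq:
  fixes u :: real assumes "u > 0" shows "ln u \<ge> 1 - 1/u"
proof -
  have "ln (1/u) \<le> 1/u - 1" using assms by (intro ln_le_minus_one) simp
  then show ?thesis using assms by (simp add: ln_div)
qed

theorem mainTheorem9:
  fixes x :: "nat \<Rightarrow> real" and t :: nat and f :: "real \<Rightarrow> real"
  assumes noninc: "\<And>n. n < t \<Longrightarrow> x (Suc n) \<le> x n"
    and nonneg: "\<And>y. y \<in> {x t..x 0} \<Longrightarrow> f y \<ge> 0"
    and pos_end: "f (x t) > 0"
    and mono: "mono_on {x t..x 0} f"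
    and C1: "\<exists>f'. (\<forall>y\<in>{x t..x 0}. (f has_real_derivative f' y) (at y within {x t..x 0}))
                   \<and> continuous_on {x t..x 0} f'"
    and step: "\<And>n. n < t \<Longrightarrow> x n - x (Suc n) \<ge> f (x (Suc n))"
  shows "ln (f (x 0) / f (x t)) + integral {x t..x 0} (\<lambda>y. 1 / f y) \<ge> real t"
proof -
  let ?I = "{x t..x 0}"
  have xin: "x m \<in> ?I" if "m \<le> t" for m
    using chain_le[of t x t m, OF noninc] chain_le[of t x m 0, OF noninc] that by auto
  have fpos: "f y > 0" if "y \<in> ?I" for y
  proof -
    have "f (x t) \<le> f y" using mono that xin[of t] by (auto intro: mono_onD)
    then show ?thesis using pos_end by linarith
  qed
  from C1 obtain f' where d: "\<forall>y\<in>?I. (f has_real_derivative f' y) (at y within ?I)" by blast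
  have cf: "continuous_on ?I f"
    using d by (meson DERIV_continuous continuous_on_eq_continuous_within)
  have cg: "continuous_on ?I (\<lambda>y. 1 / f y)"
    using cf fpos by (intro continuous_intros) (auto, metis less_irrefl)
  have intg: "(\<lambda>y. 1 / f y) integrable_on {a..b}" if "{a..b} \<subseteq> ?I" for a b
    using cg that by (meson continuous_on_subset integrable_continuous_interval)
  have "ln (f (x 0) / f (x m)) + integral {x m..x 0} (\<lambda>y. 1 / f y) \<ge> real m" if "m \<le> t" for m
    using that
  proof (induction m)
    case 0 then show ?case by simp
  next
    case (Suc m)
    have m: "m < t" using Suc.prems by simp
    have le1: "x (Suc m) \<le> x m" using noninc m by simp
    have le2: "x m \<le> x 0" using chain_le[of t x m 0, OF noninc] m by simp
    have in1: "x (Suc m) \<in> ?I" "x m \<in> ?I" "x 0 \<in> ?I" using xin m Suc.prems by auto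
    have sub: "{x (Suc m)..x 0} \<subseteq> ?I" "{x (Suc m)..x m} \<subseteq> ?I" using in1 by auto
    have comb: "integral {x (Suc m)..x m} (\<lambda>y. 1 / f y) + integral {x m..x 0} (\<lambda>y. 1 / f y)
        = integral {x (Suc m)..x 0} (\<lambda>y. 1 / f y)"
      using Henstock_Kurzweil_Integration.integral_combine[OF le1 le2 intg[OF sub(1)]] .
    define a where "a = f (x (Suc m))"
    define F where "F = f (x m)"
    have apos: "a > 0" unfolding a_def using fpos in1 by auto
    have Fpos: "F > 0" unfolding F_def using fpos in1 by auto
    have "integral {x (Suc m)..x m} (\<lambda>y. 1 / F) \<le> integral {x (Suc m)..x m} (\<lambda>y. 1 / f y)"
    proof (rule integral_le)
      show "(\<lambda>y. 1 / F) integrable_on {x (Suc m)..x m}" by (rule integrable_const_ivl)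
      show "(\<lambda>y. 1 / f y) integrable_on {x (Suc m)..x m}" using intg sub by simp
      fix y assume y: "y \<in> {x (Suc m)..x m}"
      then have yI: "y \<in> ?I" using sub by auto
      have "f y \<le> F" unfolding F_def using mono yI in1 y by (auto intro: mono_onD)
      then show "1 / F \<le> 1 / f y" using fpos[OF yI] by (simp add: frac_le)
    qed
    then have i1: "(x m - x (Suc m)) / F \<le> integral {x (Suc m)..x m} (\<lambda>y. 1 / f y)"
      using le1 by simp
    have "a / F \<le> (x m - x (Suc m)) / F" using step[OF m] Fpos unfolding a_def
      by (simp add: divide_right_mono)
    moreover have "ln (F / a) \<ge> 1 - a / F" using ln_ineq[of "F/a"] apos Fpos by simp
    moreover have "ln (f (x 0) / f (x (Suc m))) = ln (f (x 0) / f (x m)) + ln (F / a)"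
    proof -
      have p0: "f (x 0) > 0" using fpos in1 by auto
      show ?thesis unfolding a_def[symmetric] F_def[symmetric] using p0 apos Fpos by (simp add: ln_div)
    qed
    ultimately show ?case using Suc.IH m comb i1 by simp
  qed
  then show ?thesis by simp
qed

end
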